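(* Let $\mathcal A$ be a Krull–Schmidt abelian category with enough projectives and enough injectives, and let $(\mathcal X,\mathcal Z,\mathcal Y)$ be a complete hereditary cotorsion triple in $\mathcal A$. Let $\mathcal E=(\mathcal A,F_{\mathcal X})$ be the exact category whose conflations are the short exact sequences in $F_{\mathcal X}$. Then $\mathcal E$ has enough projectives and enough injectives; moreover the projective objects of $\mathcal E$ are exactly the objects of $\mathcal X$ and the injective objects of $\mathcal E$ are exactly the objects of $\mathcal Y$.
   Context: All subcategories are full, additive and closed under isomorphisms. A pair $(\mathcal X,\mathcal Y)$ of subcategories of $\mathcal A$ is a cotorsion pair if $\mathcal X=\{A:\mathrm{Ext}^1_{\mathcal A}(A,Y)=0\ \forall Y\in\mathcal Y\}$ and $\mathcal Y=\{B:\mathrm{Ext}^1_{\mathcal A}(X,B)=0\ \forall X\in\mathcal X\}$; it is complete if every $A\in\mathcal A$ admits short exact sequences $0\to Y\to X\to A\to0$ and $0\to A\to Y'\to X'\to0$ with $X,X'\in\mathcal X$, $Y,Y'\in\mathcal Y$; it is hereditary if $\mathcal X$ is resolving (contains the projectives, closed under extensions and under kernels of epimorphisms between its objects), equivalently $\mathcal Y$ is coresolving. A triple $(\mathcal X,\mathcal Z,\mathcal Y)$ is a cotorsion triple if $(\mathcal X,\mathcal Z)$ and $(\mathcal Z,\mathcal Y)$ are both cotorsion pairs; it is complete (hereditary) if both pairs are. $F_{\mathcal X}$ is the class of short exact sequences $0\to A\to B\to C\to0$ in $\mathcal A$ such that $\mathrm{Hom}_{\mathcal A}(X,B)\to\mathrm{Hom}_{\mathcal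 A}(X,C)$ is surjective for every $X\in\mathcal X$; $(\mathcal A,F_{\mathcal X})$ is an exact category. Projective (injective) objects of an exact category are those $P$ with $\mathrm{Hom}(P,-)$ (resp. $\mathrm{Hom}(-,P)$) exact on conflations; enough projectives means every object is the end term of a conflation with projective middle term, and dually for injectives. *)

theory Defs
  imports Main
begin

text \<open>A (small, set-based) preadditive category: objects, arrows with domain and
codomain, composition (comp g f = g after f), identities, and on every hom-set an
abelian group structure (zero morphism, addition, negation).\<close>

record ('o, 'm) acat =
  Obj  :: "'o set"
  Arr  :: "'m set"
  dom  :: "'m \<Rightarrow> 'o"
  cod  :: "'m \<Rightarrow> 'o"
  comp :: "'m \<Rightarrow> 'm \<Rightarrow> 'm"
  idm  :: "'o \<Rightarrow> 'm"
  zer  :: "'o \<Rightarrow> 'o \<Rightarrow> 'm"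
  plus :: "'m \<Rightarrow> 'm \<Rightarrow> 'm"
  negm :: "'m \<Rightarrow> 'm"

definition hom :: "('o,'m) acat \<Rightarrow> 'o \<Rightarrow> 'o \<Rightarrow> 'm set" where
  "hom C a b = {f \<in> Arr C. dom C f = a \<and> cod C f = b}"

definition category :: "('o,'m) acat \<Rightarrow> bool" where
  "category C \<longleftrightarrow>
     (\<forall>f\<in>Arr C. dom C f \<in> Obj C \<and> cod C f \<in> Obj C) \<and>
     (\<forall>a\<in>Obj C. idm C a \<in> hom C a a) \<and>
     (\<forall>a\<in>Obj C. \<forall>b\<in>Obj C. \<forall>c\<in>Obj C. \<forall>f\<in>hom C a b. \<forall>g\<in>hom C b c.
         comp C g f \<in> hom C a c) \<and>
     (\<forall>f\<in>Arr C. comp C (idm C (cod C f)) f = f \<and> comp C f (idm C (dom C f)) = f) \<and>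
     (\<forall>f\<in>Arr C. \<forall>g\<in>Arr C. \<forall>h\<in>Arr C. cod C f = dom C g \<longrightarrow> cod C g = dom C h \<longrightarrow>
         comp C h (comp C g f) = comp C (comp C h g) f)"

definition preadditive :: "('o,'m) acat \<Rightarrow> bool" where
  "preadditive C \<longleftrightarrow> category C \<and>
     (\<forall>a\<in>Obj C. \<forall>b\<in>Obj C.
        zer C a b \<in> hom C a b \<and>
        (\<forall>f\<in>hom C a b. \<forall>g\<in>hom C a b. plus C f g \<in> hom C a b) \<and>
        (\<forall>f\<in>hom C a b. negm C f \<in> hom C a b) \<and>
        (\<forall>f\<in>hom C a b. \<forall>g\<in>hom C a b. \<forall>h\<in>hom C a b.
            plus C (plus C f g) h = plus C f (plus C g h)) \<and>
        (\<forall>f\<in>hom C a b. \<forall>g\<in>hom C a b. plus C f g = plus C g f) \<and>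
        (\<forall>f\<in>hom C a b. plus C f (zer C a b) = f) \<and>
        (\<forall>f\<in>hom C a b. plus C f (negm C f) = zer C a b)) \<and>
     (\<forall>a\<in>Obj C. \<forall>b\<in>Obj C. \<forall>c\<in>Obj C. \<forall>f\<in>hom C a b. \<forall>g\<in>hom C a b. \<forall>h\<in>hom C b c.
        comp C h (plus C f g) = plus C (comp C h f) (comp C h g)) \<and>
     (\<forall>a\<in>Obj C. \<forall>b\<in>Obj C. \<forall>c\<in>Obj C. \<forall>h\<in>hom C a b. \<forall>f\<in>hom C b c. \<forall>g\<in>hom C b c.
        comp C (plus C f g) h = plus C (comp C f h) (comp C g h))"

definition zero_object :: "('o,'m) acat \<Rightarrow> 'o \<Rightarrow> bool" where
  "zero_object C z \<longleftrightarrow> z \<in> Obj C \<and>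
     (\<forall>a\<in>Obj C. hom C z a = {zer C z a} \<and> hom C a z = {zer C a z})"

definition biproduct ::
  "('o,'m) acat \<Rightarrow> 'o \<Rightarrow> 'o \<Rightarrow> 'o \<Rightarrow> 'm \<Rightarrow> 'm \<Rightarrow> 'm \<Rightarrow> 'm \<Rightarrow> bool" where
  "biproduct C a b s p1 p2 i1 i2 \<longleftrightarrow> s \<in> Obj C \<and>
     p1 \<in> hom C s a \<and> p2 \<in> hom C s b \<and> i1 \<in> hom C a s \<and> i2 \<in> hom C b s \<and>
     comp C p1 i1 = idm C a \<and> comp C p2 i2 = idm C b \<and>
     comp C p2 i1 = zer C a b \<and> comp C p1 i2 = zer C b a \<and>
     plus C (comp C i1 p1) (comp C i2 p2) = idm C s"

definition mono :: "('o,'m) acat \<Rightarrow> 'm \<Rightarrow> bool" where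
  "mono C f \<longleftrightarrow> f \<in> Arr C \<and>
     (\<forall>g\<in>Arr C. \<forall>h\<in>Arr C. cod C g = dom C f \<longrightarrow> cod C h = dom C f \<longrightarrow> dom C g = dom C h \<longrightarrow>
        comp C f g = comp C f h \<longrightarrow> g = h)"

definition epi :: "('o,'m) acat \<Rightarrow> 'm \<Rightarrow> bool" where
  "epi C f \<longleftrightarrow> f \<in> Arr C \<and>
     (\<forall>g\<in>Arr C. \<forall>h\<in>Arr C. dom C g = cod C f \<longrightarrow> dom C h = cod C f \<longrightarrow> cod C g = cod C h \<longrightarrow>
        comp C g f = comp C h f \<longrightarrow> g = h)"

definition is_kernel :: "('o,'m) acat \<Rightarrow> 'm \<Rightarrow> 'm \<Rightarrow> bool" where
  "is_kernel C f k \<longleftrightarrow> f \<in> Arr C \<and> k \<in> Arr C \<and> cod C k = dom C f \<and>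
     comp C f k = zer C (dom C k) (cod C f) \<and>
     (\<forall>g\<in>Arr C. cod C g = dom C f \<longrightarrow> comp C f g = zer C (dom C g) (cod C f) \<longrightarrow>
        (\<exists>!u. u \<in> hom C (dom C g) (dom C k) \<and> comp C k u = g))"

definition is_cokernel :: "('o,'m) acat \<Rightarrow> 'm \<Rightarrow> 'm \<Rightarrow> bool" where
  "is_cokernel C f c \<longleftrightarrow> f \<in> Arr C \<and> c \<in> Arr C \<and> dom C c = cod C f \<and>
     comp C c f = zer C (dom C f) (cod C c) \<and>
     (\<forall>g\<in>Arr C. dom C g = cod C f \<longrightarrow> comp C g f = zer C (dom C f) (cod C g) \<longrightarrow>
        (\<exists>!u. u \<in> hom C (cod C c) (cod C g) \<and> comp C u c = g))"

definition abelian :: "('o,'m) acat \<Rightarrow> bool" where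
  "abelian C \<longleftrightarrow> preadditive C \<and>
     (\<exists>z. zero_object C z) \<and>
     (\<forall>a\<in>Obj C. \<forall>b\<in>Obj C. \<exists>s p1 p2 i1 i2. biproduct C a b s p1 p2 i1 i2) \<and>
     (\<forall>f\<in>Arr C. (\<exists>k. is_kernel C f k) \<and> (\<exists>c. is_cokernel C f c)) \<and>
     (\<forall>f. mono C f \<longrightarrow> (\<exists>g. is_kernel C g f)) \<and>
     (\<forall>f. epi C f \<longrightarrow> (\<exists>g. is_cokernel C g f))"

text \<open>Short exact sequence 0 \<rightarrow> dom f \<rightarrow> cod f = dom g \<rightarrow> cod g \<rightarrow> 0.\<close>
definition ses :: "('o,'m) acat \<Rightarrow> 'm \<Rightarrow> 'm \<Rightarrow> bool" where
  "ses C f g \<longleftrightarrow> is_kernel C g f \<and> is_cokernel C f g"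

definition is_unit_end :: "('o,'m) acat \<Rightarrow> 'o \<Rightarrow> 'm \<Rightarrow> bool" where
  "is_unit_end C a f \<longleftrightarrow> (\<exists>g\<in>hom C a a. comp C g f = idm C a \<and> comp C f g = idm C a)"

definition local_end :: "('o,'m) acat \<Rightarrow> 'o \<Rightarrow> bool" where
  "local_end C a \<longleftrightarrow> a \<in> Obj C \<and> idm C a \<noteq> zer C a a \<and>
     (\<forall>f\<in>hom C a a. \<forall>g\<in>hom C a a. \<not> is_unit_end C a f \<longrightarrow> \<not> is_unit_end C a g \<longrightarrow>
        \<not> is_unit_end C a (plus C f g))"

definition msum :: "('o,'m) acat \<Rightarrow> 'o \<Rightarrow> 'o \<Rightarrow> 'm list \<Rightarrow> 'm" where
  "msum C a b fs = foldr (plus C) fs (zer C a b)"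

text \<open>Every object is a finite direct sum of objects with local endomorphism rings.\<close>
definition krull_schmidt :: "('o,'m) acat \<Rightarrow> bool" where
  "krull_schmidt C \<longleftrightarrow> (\<forall>a\<in>Obj C. \<exists>bs ins prs.
     length ins = length bs \<and> length prs = length bs \<and>
     (\<forall>k<length bs. local_end C (bs!k) \<and> ins!k \<in> hom C (bs!k) a \<and> prs!k \<in> hom C a (bs!k)) \<and>
     (\<forall>k<length bs. \<forall>l<length bs.
        comp C (prs!k) (ins!l) = (if k = l then idm C (bs!k) else zer C (bs!l) (bs!k))) \<and>
     msum C a a (map2 (comp C) ins prs) = idm C a)"

definition projective :: "('o,'m) acat \<Rightarrow> 'o \<Rightarrow> bool" where
  "projective C P \<longleftrightarrow> P \<in> Obj C \<and>
     (\<forall>e h. epi C e \<longrightarrow> h \<in> hom C P (cod C e) \<longrightarrow>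
        (\<exists>h'\<in>hom C P (dom C e). comp C e h' = h))"

definition injective :: "('o,'m) acat \<Rightarrow> 'o \<Rightarrow> bool" where
  "injective C I \<longleftrightarrow> I \<in> Obj C \<and>
     (\<forall>m h. mono C m \<longrightarrow> h \<in> hom C (dom C m) I \<longrightarrow>
        (\<exists>h'\<in>hom C (cod C m) I. comp C h' m = h))"

definition enough_projectives :: "('o,'m) acat \<Rightarrow> bool" where
  "enough_projectives C \<longleftrightarrow>
     (\<forall>a\<in>Obj C. \<exists>P e. projective C P \<and> e \<in> hom C P a \<and> epi C e)"

definition enough_injectives :: "('o,'m) acat \<Rightarrow> bool" where
  "enough_injectives C \<longleftrightarrow>
     (\<forall>a\<in>Obj C. \<exists>I m. injective C I \<and> m \<in> hom C a I \<and> mono C m)"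

text \<open>Ext^1(A,B) = 0: every extension 0 \<rightarrow> B \<rightarrow> E \<rightarrow> A \<rightarrow> 0 splits (the Yoneda
class of every extension is the zero = split class).\<close>
definition ext1_zero :: "('o,'m) acat \<Rightarrow> 'o \<Rightarrow> 'o \<Rightarrow> bool" where
  "ext1_zero C A B \<longleftrightarrow>
     (\<forall>f g. ses C f g \<longrightarrow> dom C f = B \<longrightarrow> cod C g = A \<longrightarrow>
        (\<exists>s\<in>hom C A (dom C g). comp C g s = idm C A))"

definition cotorsion_pair :: "('o,'m) acat \<Rightarrow> 'o set \<Rightarrow> 'o set \<Rightarrow> bool" where
  "cotorsion_pair C X Y \<longleftrightarrow>
     X = {A\<in>Obj C. \<forall>B\<in>Y. ext1_zero C A B} \<and>
     Y = {B\<in>Obj C. \<forall>A\<in>X. ext1_zero C A B}"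

definition complete_cotorsion_pair :: "('o,'m) acat \<Rightarrow> 'o set \<Rightarrow> 'o set \<Rightarrow> bool" where
  "complete_cotorsion_pair C X Y \<longleftrightarrow> cotorsion_pair C X Y \<and>
     (\<forall>A\<in>Obj C.
        (\<exists>f g. ses C f g \<and> dom C f \<in> Y \<and> dom C g \<in> X \<and> cod C g = A) \<and>
        (\<exists>f g. ses C f g \<and> dom C f = A \<and> dom C g \<in> Y \<and> cod C g \<in> X))"

definition resolving :: "('o,'m) acat \<Rightarrow> 'o set \<Rightarrow> bool" where
  "resolving C X \<longleftrightarrow> X \<subseteq> Obj C \<and>
     (\<forall>P. projective C P \<longrightarrow> P \<in> X) \<and>
     (\<forall>f g. ses C f g \<longrightarrow> dom C f \<in> X \<longrightarrow> cod C g \<in> X \<longrightarrow> dom C g \<in> X) \<and>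
     (\<forall>f g. ses C f g \<longrightarrow> dom C g \<in> X \<longrightarrow> cod C g \<in> X \<longrightarrow> dom C f \<in> X)"

definition hereditary_cotorsion_pair :: "('o,'m) acat \<Rightarrow> 'o set \<Rightarrow> 'o set \<Rightarrow> bool" where
  "hereditary_cotorsion_pair C X Y \<longleftrightarrow> cotorsion_pair C X Y \<and> resolving C X"

definition complete_hereditary_cotorsion_triple ::
  "('o,'m) acat \<Rightarrow> 'o set \<Rightarrow> 'o set \<Rightarrow> 'o set \<Rightarrow> bool" where
  "complete_hereditary_cotorsion_triple C X Z Y \<longleftrightarrow>
     complete_cotorsion_pair C X Z \<and> hereditary_cotorsion_pair C X Z \<and>
     complete_cotorsion_pair C Z Y \<and> hereditary_cotorsion_pair C Z Y"

definition F_conflation :: "('o,'m) acat \<Rightarrow> 'o set \<Rightarrow> 'm \<Rightarrow> 'm \<Rightarrow> bool" where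
  "F_conflation C X f g \<longleftrightarrow> ses C f g \<and>
     (\<forall>W\<in>X. \<forall>h\<in>hom C W (cod C g). \<exists>h'\<in>hom C W (dom C g). comp C g h' = h)"

text \<open>P is projective in (A, F_X): Hom(P,-) sends every conflation
0 \<rightarrow> A \<rightarrow> B \<rightarrow> C \<rightarrow> 0 to an exact sequence of abelian groups
0 \<rightarrow> Hom(P,A) \<rightarrow> Hom(P,B) \<rightarrow> Hom(P,C) \<rightarrow> 0.\<close>
definition F_projective :: "('o,'m) acat \<Rightarrow> 'o set \<Rightarrow> 'o \<Rightarrow> bool" where
  "F_projective C X P \<longleftrightarrow> P \<in> Obj C \<and>
     (\<forall>f g. F_conflation C X f g \<longrightarrow>
        inj_on (comp C f) (hom C P (dom C f)) \<and>
        comp C f ` hom C P (dom C f) =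
          {u \<in> hom C P (dom C g). comp C g u = zer C P (cod C g)} \<and>
        comp C g ` hom C P (dom C g) = hom C P (cod C g))"

text \<open>I is injective in (A, F_X): Hom(-,I) sends every conflation to an exact
sequence 0 \<rightarrow> Hom(C,I) \<rightarrow> Hom(B,I) \<rightarrow> Hom(A,I) \<rightarrow> 0.\<close>
definition F_injective :: "('o,'m) acat \<Rightarrow> 'o set \<Rightarrow> 'o \<Rightarrow> bool" where
  "F_injective C X I \<longleftrightarrow> I \<in> Obj C \<and>
     (\<forall>f g. F_conflation C X f g \<longrightarrow>
        inj_on (\<lambda>u. comp C u g) (hom C (cod C g) I) \<and>
        (\<lambda>u. comp C u g) ` hom C (cod C g) I =
          {v \<in> hom C (dom C g) I. comp C v f = zer C (dom C f) I} \<and>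
        (\<lambda>v. comp C v f) ` hom C (dom C g) I = hom C (dom C f) I)"

definition F_enough_projectives :: "('o,'m) acat \<Rightarrow> 'o set \<Rightarrow> bool" where
  "F_enough_projectives C X \<longleftrightarrow>
     (\<forall>a\<in>Obj C. \<exists>f g. F_conflation C X f g \<and> F_projective C X (dom C g) \<and> cod C g = a)"

definition F_enough_injectives :: "('o,'m) acat \<Rightarrow> 'o set \<Rightarrow> bool" where
  "F_enough_injectives C X \<longleftrightarrow>
     (\<forall>a\<in>Obj C. \<exists>f g. F_conflation C X f g \<and> F_injective C X (cod C f) \<and> dom C f = a)"

end

theory Submission
  imports Defs
begin



definition sub :: "('o,'m) acat \<Rightarrow> 'm \<Rightarrow> 'm \<Rightarrow> 'm" where
  "sub C f g = plus C f (negm C g)"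

locale ab = fixes C :: "('o,'m) acat" assumes ab: "abelian C"
begin

lemma pre: "preadditive C" using ab unfolding abelian_def by blast
lemma cat: "category C" using pre unfolding preadditive_def by blast

lemma hom_iff: "f \<in> hom C a b \<longleftrightarrow> f \<in> Arr C \<and> dom C f = a \<and> cod C f = b" by (simp add: hom_def)

lemma arr_hom: "f \<in> Arr C \<Longrightarrow> f \<in> hom C (dom C f) (cod C f)" by (simp add: hom_def)

lemma hom_objs: "f \<in> hom C a b \<Longrightarrow> a \<in> Obj C \<and> b \<in> Obj C"
  using cat unfolding category_def hom_def by auto

lemma id_hom: "a \<in> Obj C \<Longrightarrow> idm C a \<in> hom C a a"
  using cat unfolding category_def by auto

lemma comp_hom: "f \<in> hom C a b \<Longrightarrow> g \<in> hom C b c \<Longrightarrow> comp C g f \<in> hom C a c"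
  using cat hom_objs unfolding category_def by metis

lemma id_l: "f \<in> hom C a b \<Longrightarrow> comp C (idm C b) f = f"
  using cat unfolding category_def hom_def by auto

lemma id_r: "f \<in> hom C a b \<Longrightarrow> comp C f (idm C a) = f"
  using cat unfolding category_def hom_def by auto

lemma assoc: "f \<in> hom C a b \<Longrightarrow> g \<in> hom C b c \<Longrightarrow> h \<in> hom C c d \<Longrightarrow>
   comp C h (comp C g f) = comp C (comp C h g) f"
  using cat unfolding category_def hom_def by auto

lemma grp: assumes "a \<in> Obj C" "b \<in> Obj C" shows
        "zer C a b \<in> hom C a b \<and>
        (\<forall>f\<in>hom C a b. \<forall>g\<in>hom C a b. plus C f g \<in> hom C a b) \<and>
        (\<forall>f\<in>hom C a b. negm C f \<in> hom C a b) \<and>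
        (\<forall>f\<in>hom C a b. \<forall>g\<in>hom C a b. \<forall>h\<in>hom C a b.
            plus C (plus C f g) h = plus C f (plus C g h)) \<and>
        (\<forall>f\<in>hom C a b. \<forall>g\<in>hom C a b. plus C f g = plus C g f) \<and>
        (\<forall>f\<in>hom C a b. plus C f (zer C a b) = f) \<and>
        (\<forall>f\<in>hom C a b. plus C f (negm C f) = zer C a b)"
proof -
  have "\<forall>a\<in>Obj C. \<forall>b\<in>Obj C.
        zer C a b \<in> hom C a b \<and>
        (\<forall>f\<in>hom C a b. \<forall>g\<in>hom C a b. plus C f g \<in> hom C a b) \<and>
        (\<forall>f\<in>hom C a b. negm C f \<in> hom C a b) \<and>
        (\<forall>f\<in>hom C a b. \<forall>g\<in>hom C a b. \<forall>h\<in>hom C a b.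
            plus C (plus C f g) h = plus C f (plus C g h)) \<and>
        (\<forall>f\<in>hom C a b. \<forall>g\<in>hom C a b. plus C f g = plus C g f) \<and>
        (\<forall>f\<in>hom C a b. plus C f (zer C a b) = f) \<and>
        (\<forall>f\<in>hom C a b. plus C f (negm C f) = zer C a b)"
    using pre unfolding preadditive_def by (elim conjE) assumption
  then show ?thesis using assms by blast
qed

lemma zer_hom: "a \<in> Obj C \<Longrightarrow> b \<in> Obj C \<Longrightarrow> zer C a b \<in> hom C a b"
  using grp by blast

lemma plus_hom: "f \<in> hom C a b \<Longrightarrow> g \<in> hom C a b \<Longrightarrow> plus C f g \<in> hom C a b"
  using grp hom_objs by blast

lemma neg_hom: "f \<in> hom C a b \<Longrightarrow> negm C f \<in> hom C a b"
  using grp hom_objs by blast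

lemma plus_assoc: "f \<in> hom C a b \<Longrightarrow> g \<in> hom C a b \<Longrightarrow> h \<in> hom C a b \<Longrightarrow>
   plus C (plus C f g) h = plus C f (plus C g h)"
  using grp hom_objs by blast

lemma plus_comm: "f \<in> hom C a b \<Longrightarrow> g \<in> hom C a b \<Longrightarrow> plus C f g = plus C g f"
  using grp hom_objs by blast

lemma plus_zer: "f \<in> hom C a b \<Longrightarrow> plus C f (zer C a b) = f"
  using grp hom_objs by blast

lemma plus_neg: "f \<in> hom C a b \<Longrightarrow> plus C f (negm C f) = zer C a b"
  using grp hom_objs by blast

lemma distrib_l: "f \<in> hom C a b \<Longrightarrow> g \<in> hom C a b \<Longrightarrow> h \<in> hom C b c \<Longrightarrow>
   comp C h (plus C f g) = plus C (comp C h f) (comp C h g)"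
proof -
  assume a: "f \<in> hom C a b" "g \<in> hom C a b" "h \<in> hom C b c"
  then have "a \<in> Obj C" "b \<in> Obj C" "c \<in> Obj C" using hom_objs by auto
  with a pre show ?thesis unfolding preadditive_def by blast
qed

lemma distrib_r: "h \<in> hom C a b \<Longrightarrow> f \<in> hom C b c \<Longrightarrow> g \<in> hom C b c \<Longrightarrow>
   comp C (plus C f g) h = plus C (comp C f h) (comp C g h)"
proof -
  assume a: "h \<in> hom C a b" "f \<in> hom C b c" "g \<in> hom C b c"
  then have "a \<in> Obj C" "b \<in> Obj C" "c \<in> Obj C" using hom_objs by auto
  with a pre show ?thesis unfolding preadditive_def by blast
qed

lemma zer_plus: "f \<in> hom C a b \<Longrightarrow> plus C (zer C a b) f = f"
  by (metis hom_objs plus_comm plus_zer zer_hom)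

lemma neg_unique: "f \<in> hom C a b \<Longrightarrow> g \<in> hom C a b \<Longrightarrow> plus C f g = zer C a b \<Longrightarrow> g = negm C f"
proof -
  assume a: "f \<in> hom C a b" "g \<in> hom C a b" "plus C f g = zer C a b"
  have n: "negm C f \<in> hom C a b" using a neg_hom by auto
  have "g = plus C g (plus C f (negm C f))" using a plus_neg plus_zer by simp
  also have "\<dots> = plus C (plus C g f) (negm C f)" using a n plus_assoc by simp
  also have "\<dots> = plus C (zer C a b) (negm C f)" using a plus_comm by simp
  also have "\<dots> = negm C f" using n zer_plus by simp
  finally show ?thesis .
qed

lemma idem_zer: "x \<in> hom C a b \<Longrightarrow> plus C x x = x \<Longrightarrow> x = zer C a b"
proof -
  assume a: "x \<in> hom C a b" "plus C x x = x"
  have n: "negm C x \<in> hom C a b" using a neg_hom by auto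
  have "x = plus C x (plus C x (negm C x))" using a plus_neg plus_zer by simp
  also have "\<dots> = plus C (plus C x x) (negm C x)" using a n plus_assoc by metis
  also have "\<dots> = zer C a b" using a plus_neg by simp
  finally show ?thesis .
qed

lemma comp_zer_r: "h \<in> hom C b c \<Longrightarrow> a \<in> Obj C \<Longrightarrow> comp C h (zer C a b) = zer C a c"
proof -
  assume a: "h \<in> hom C b c" "a \<in> Obj C"
  have z: "zer C a b \<in> hom C a b" using a hom_objs zer_hom by auto
  have y: "comp C h (zer C a b) \<in> hom C a c" using comp_hom a z by auto
  have "plus C (comp C h (zer C a b)) (comp C h (zer C a b)) = comp C h (plus C (zer C a b) (zer C a b))"
    using distrib_l z a by simp
  also have "\<dots> = comp C h (zer C a b)" using plus_zer z by simp
  finally show ?thesis using idem_zer y by blast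
qed

lemma comp_zer_l: "h \<in> hom C a b \<Longrightarrow> c \<in> Obj C \<Longrightarrow> comp C (zer C b c) h = zer C a c"
proof -
  assume a: "h \<in> hom C a b" "c \<in> Obj C"
  have z: "zer C b c \<in> hom C b c" using a hom_objs zer_hom by auto
  have y: "comp C (zer C b c) h \<in> hom C a c" using comp_hom a z by auto
  have "plus C (comp C (zer C b c) h) (comp C (zer C b c) h) = comp C (plus C (zer C b c) (zer C b c)) h"
    using distrib_r z a by simp
  also have "\<dots> = comp C (zer C b c) h" using plus_zer z by simp
  finally show ?thesis using idem_zer y by blast
qed

lemma comp_neg_r: "f \<in> hom C a b \<Longrightarrow> h \<in> hom C b c \<Longrightarrow> comp C h (negm C f) = negm C (comp C h f)"
proof -
  assume a: "f \<in> hom C a b" "h \<in> hom C b c"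
  have n: "negm C f \<in> hom C a b" using a neg_hom by auto
  have "plus C (comp C h f) (comp C h (negm C f)) = comp C h (plus C f (negm C f))"
    using distrib_l a n by simp
  also have "\<dots> = zer C a c" using plus_neg a comp_zer_r hom_objs by simp
  finally show ?thesis using neg_unique comp_hom a n by blast
qed

lemma comp_neg_l: "h \<in> hom C a b \<Longrightarrow> f \<in> hom C b c \<Longrightarrow> comp C (negm C f) h = negm C (comp C f h)"
proof -
  assume a: "h \<in> hom C a b" "f \<in> hom C b c"
  have n: "negm C f \<in> hom C b c" using a neg_hom by auto
  have "plus C (comp C f h) (comp C (negm C f) h) = comp C (plus C f (negm C f)) h"
    using distrib_r a n by simp
  also have "\<dots> = zer C a c" using plus_neg a comp_zer_l hom_objs by simp
  finally show ?thesis using neg_unique comp_hom a n by blast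
qed

lemma sub_hom: "f \<in> hom C a b \<Longrightarrow> g \<in> hom C a b \<Longrightarrow> sub C f g \<in> hom C a b"
  unfolding sub_def using plus_hom neg_hom by blast

lemma sub_eq: "f \<in> hom C a b \<Longrightarrow> g \<in> hom C a b \<Longrightarrow> sub C f g = zer C a b \<Longrightarrow> f = g"
proof -
  assume a: "f \<in> hom C a b" "g \<in> hom C a b" "sub C f g = zer C a b"
  have n: "negm C g \<in> hom C a b" using a neg_hom by auto
  have "f = plus C f (plus C (negm C g) g)" using a n plus_neg plus_comm plus_zer by metis
  also have "\<dots> = plus C (sub C f g) g" unfolding sub_def using plus_assoc a n by simp
  also have "\<dots> = g" using a zer_plus by simp
  finally show ?thesis .
qed

lemma sub_self: "f \<in> hom C a b \<Longrightarrow> sub C f f = zer C a b"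
  unfolding sub_def using plus_neg by simp

lemma neg_zer: "a \<in> Obj C \<Longrightarrow> b \<in> Obj C \<Longrightarrow> negm C (zer C a b) = zer C a b"
  by (metis neg_unique plus_zer zer_hom)

lemma sub_zer: "f \<in> hom C a b \<Longrightarrow> sub C f (zer C a b) = f"
  unfolding sub_def using neg_zer hom_objs plus_zer by metis

lemma comp_sub_l: "f \<in> hom C a b \<Longrightarrow> g \<in> hom C a b \<Longrightarrow> h \<in> hom C b c \<Longrightarrow>
   comp C h (sub C f g) = sub C (comp C h f) (comp C h g)"
  unfolding sub_def using distrib_l comp_neg_r neg_hom by metis

lemma comp_sub_r: "h \<in> hom C a b \<Longrightarrow> f \<in> hom C b c \<Longrightarrow> g \<in> hom C b c \<Longrightarrow>
   comp C (sub C f g) h = sub C (comp C f h) (comp C g h)"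
  unfolding sub_def using distrib_r comp_neg_l neg_hom by metis

end



context ab begin

lemma mono_cancel: "mono C f \<Longrightarrow> a \<in> hom C x (dom C f) \<Longrightarrow> b \<in> hom C x (dom C f) \<Longrightarrow>
  comp C f a = comp C f b \<Longrightarrow> a = b"
  unfolding mono_def hom_def by auto

lemma epi_cancel: "epi C e \<Longrightarrow> a \<in> hom C (cod C e) y \<Longrightarrow> b \<in> hom C (cod C e) y \<Longrightarrow>
  comp C a e = comp C b e \<Longrightarrow> a = b"
  unfolding epi_def hom_def by auto

lemma kernel_arrs: "is_kernel C g f \<Longrightarrow> f \<in> hom C (dom C f) (dom C g) \<and> g \<in> hom C (dom C g) (cod C g)
   \<and> comp C g f = zer C (dom C f) (cod C g)"
proof -
  assume "is_kernel C g f"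
  then have "g \<in> Arr C \<and> f \<in> Arr C \<and> cod C f = dom C g \<and> comp C g f = zer C (dom C f) (cod C g)"
    unfolding is_kernel_def by (elim conjE) (intro conjI)
  then show ?thesis unfolding hom_def by simp
qed

lemma cokernel_arrs: "is_cokernel C f c \<Longrightarrow> f \<in> hom C (dom C f) (cod C f) \<and> c \<in> hom C (cod C f) (cod C c)
   \<and> comp C c f = zer C (dom C f) (cod C c)"
proof -
  assume "is_cokernel C f c"
  then have "f \<in> Arr C \<and> c \<in> Arr C \<and> dom C c = cod C f \<and> comp C c f = zer C (dom C f) (cod C c)"
    unfolding is_cokernel_def by (elim conjE) (intro conjI)
  then show ?thesis unfolding hom_def by simp
qed

lemma kernel_factor1: "is_kernel C g f \<Longrightarrow> t \<in> hom C x (dom C g) \<Longrightarrow> comp C g t = zer C x (cod C g) \<Longrightarrow>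
  \<exists>!u. u\<in>hom C x (dom C f) \<and> comp C f u = t"
proof -
  assume k: "is_kernel C g f" and t: "t \<in> hom C x (dom C g)" and z: "comp C g t = zer C x (cod C g)"
  have "t \<in> Arr C" "cod C t = dom C g" "dom C t = x" using t hom_iff by auto
  moreover have U: "\<forall>g'\<in>Arr C. cod C g' = dom C g \<longrightarrow> comp C g g' = zer C (dom C g') (cod C g) \<longrightarrow>
        (\<exists>!u. u \<in> hom C (dom C g') (dom C f) \<and> comp C f u = g')" using k unfolding is_kernel_def by (elim conjE) assumption
  ultimately have "\<exists>!u. u \<in> hom C (dom C t) (dom C f) \<and> comp C f u = t"
    using z by (intro U[rule_format]) simp_all
  then show ?thesis using \<open>dom C t = x\<close> by simp
qed

lemma kernel_factor: "is_kernel C g f \<Longrightarrow> t \<in> hom C x (dom C g) \<Longrightarrow> comp C g t = zer C x (cod C g) \<Longrightarrow>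
  \<exists>u\<in>hom C x (dom C f). comp C f u = t"
  using kernel_factor1 by blast


lemma cokernel_factor1: "is_cokernel C f c \<Longrightarrow> t \<in> hom C (cod C f) y \<Longrightarrow> comp C t f = zer C (dom C f) y \<Longrightarrow>
  \<exists>!u. u\<in>hom C (cod C c) y \<and> comp C u c = t"
proof -
  assume k: "is_cokernel C f c" and t: "t \<in> hom C (cod C f) y" and z: "comp C t f = zer C (dom C f) y"
  have "t \<in> Arr C" "dom C t = cod C f" "cod C t = y" using t hom_iff by auto
  moreover have U: "\<forall>g\<in>Arr C. dom C g = cod C f \<longrightarrow> comp C g f = zer C (dom C f) (cod C g) \<longrightarrow>
        (\<exists>!u. u \<in> hom C (cod C c) (cod C g) \<and> comp C u c = g)" using k unfolding is_cokernel_def by (elim conjE) assumption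
  ultimately have "\<exists>!u. u \<in> hom C (cod C c) (cod C t) \<and> comp C u c = t"
    using z by (intro U[rule_format]) simp_all
  then show ?thesis using \<open>cod C t = y\<close> by simp
qed

lemma cokernel_factor: "is_cokernel C f c \<Longrightarrow> t \<in> hom C (cod C f) y \<Longrightarrow> comp C t f = zer C (dom C f) y \<Longrightarrow>
  \<exists>u\<in>hom C (cod C c) y. comp C u c = t"
  using cokernel_factor1 by blast


lemma kernel_mono: assumes k: "is_kernel C g f" shows "mono C f"
proof -
  have fa: "f \<in> hom C (dom C f) (dom C g)" and ga: "g \<in> hom C (dom C g) (cod C g)"
    and gf: "comp C g f = zer C (dom C f) (cod C g)" using kernel_arrs[OF k] by auto
  show ?thesis unfolding mono_def
  proof (intro conjI ballI impI)
    show "f \<in> Arr C" using fa hom_iff by auto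
    fix a b assume a: "a \<in> Arr C" "b \<in> Arr C" "cod C a = dom C f" "cod C b = dom C f"
      "dom C a = dom C b" "comp C f a = comp C f b"
    define x where "x = dom C a"
    have ah: "a \<in> hom C x (dom C f)" and bh: "b \<in> hom C x (dom C f)" using a x_def hom_iff by auto
    have fah: "comp C f a \<in> hom C x (dom C g)" using comp_hom ah fa by blast
    have "comp C g (comp C f a) = comp C (zer C (dom C f) (cod C g)) a" using assoc[OF ah fa ga] gf by simp
    also have "\<dots> = zer C x (cod C g)" using comp_zer_l[OF ah] hom_objs[OF ga] by simp
    finally have "comp C g (comp C f a) = zer C x (cod C g)" .
    then have "\<exists>!u. u \<in> hom C x (dom C f) \<and> comp C f u = comp C f a"
      using kernel_factor1[OF k fah] by simp
    then show "a = b" using ah bh a(6) by metis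
  qed
qed

lemma cokernel_epi: assumes k: "is_cokernel C f c" shows "epi C c"
proof -
  have fa: "f \<in> hom C (dom C f) (cod C f)" and ca: "c \<in> hom C (cod C f) (cod C c)"
    and cf: "comp C c f = zer C (dom C f) (cod C c)" using cokernel_arrs[OF k] by auto
  show ?thesis unfolding epi_def
  proof (intro conjI ballI impI)
    show "c \<in> Arr C" using ca hom_iff by auto
    fix a b assume a: "a \<in> Arr C" "b \<in> Arr C" "dom C a = cod C c" "dom C b = cod C c"
      "cod C a = cod C b" "comp C a c = comp C b c"
    define y where "y = cod C a"
    have ah: "a \<in> hom C (cod C c) y" and bh: "b \<in> hom C (cod C c) y" using a y_def hom_iff by auto
    have fah: "comp C a c \<in> hom C (cod C f) y" using comp_hom ah ca by blast
    have "comp C (comp C a c) f = comp C a (zer C (dom C f) (cod C c))" using assoc[OF fa ca ah] cf by simp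
    also have "\<dots> = zer C (dom C f) y" using comp_zer_r[OF ah] hom_objs[OF fa] by simp
    finally have "comp C (comp C a c) f = zer C (dom C f) y" .
    then have "\<exists>!u. u \<in> hom C (cod C c) y \<and> comp C u c = comp C a c"
      using cokernel_factor1[OF k fah] by simp
    then show "a = b" using ah bh a(6) by metis
  qed
qed

lemma epi_coker_of_ker: assumes e: "epi C e" and k: "is_kernel C e k" shows "is_cokernel C k e"
proof -
  have "\<forall>f. epi C f \<longrightarrow> (\<exists>g. is_cokernel C g f)" using ab unfolding abelian_def by (elim conjE) assumption
  then obtain g where g: "is_cokernel C g e" using e by blast
  have ka: "k \<in> hom C (dom C k) (dom C e)" and ea: "e \<in> hom C (dom C e) (cod C e)"
    and ek: "comp C e k = zer C (dom C k) (cod C e)" using kernel_arrs[OF k] by auto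
  have ga0: "g \<in> hom C (dom C g) (cod C g)" and eg: "comp C e g = zer C (dom C g) (cod C e)"
    using cokernel_arrs[OF g] by auto
  have "dom C e = cod C g" using g unfolding is_cokernel_def by (elim conjE) assumption
  then have ga: "g \<in> hom C (dom C g) (dom C e)" using ga0 by simp
  obtain w where w: "w \<in> hom C (dom C g) (dom C k)" "comp C k w = g"
    using kernel_factor[OF k ga eg] by blast
  show ?thesis unfolding is_cokernel_def
  proof (intro conjI allI ballI impI)
    show "k \<in> Arr C" "e \<in> Arr C" using ka ea hom_iff by auto
    show "dom C e = cod C k" using ka hom_iff by auto
    show "comp C e k = zer C (dom C k) (cod C e)" by (fact ek)
    fix t assume t: "t \<in> Arr C" "dom C t = cod C k" "comp C t k = zer C (dom C k) (cod C t)"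
    have th: "t \<in> hom C (dom C e) (cod C t)" using t ka hom_iff by auto
    have "comp C t g = comp C (comp C t k) w" using assoc[OF w(1) ka th] w by simp
    also have "\<dots> = zer C (dom C g) (cod C t)" using t(3) comp_zer_l[OF w(1)] th hom_objs by simp
    finally have "comp C t g = zer C (dom C g) (cod C t)" .
    then show "\<exists>!u. u \<in> hom C (cod C e) (cod C t) \<and> comp C u e = t"
      using cokernel_factor1[OF g] th \<open>dom C e = cod C g\<close> by simp
  qed
qed

lemma ses_facts: assumes "ses C f g" shows
  "f \<in> hom C (dom C f) (dom C g)" "g \<in> hom C (dom C g) (cod C g)"
  "comp C g f = zer C (dom C f) (cod C g)" "mono C f" "epi C g" "cod C f = dom C g"
proof -
  have k: "is_kernel C g f" and c: "is_cokernel C f g" using assms unfolding ses_def by auto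
  show "f \<in> hom C (dom C f) (dom C g)" "g \<in> hom C (dom C g) (cod C g)"
    "comp C g f = zer C (dom C f) (cod C g)" using kernel_arrs[OF k] by auto
  show "mono C f" using kernel_mono[OF k] .
  show "epi C g" using cokernel_epi[OF c] .
  show "cod C f = dom C g" using c unfolding is_cokernel_def by (elim conjE) simp
qed

end



definition op :: "('o,'m) acat \<Rightarrow> ('o,'m) acat" where
  "op C = \<lparr>Obj = Obj C, Arr = Arr C, dom = cod C, cod = dom C, comp = (\<lambda>g f. comp C f g),
     idm = idm C, zer = (\<lambda>a b. zer C b a), plus = plus C, negm = negm C\<rparr>"

lemma op_simps[simp]: "Obj (op C) = Obj C" "Arr (op C) = Arr C" "dom (op C) = cod C" "cod (op C) = dom C"
  "comp (op C) g f = comp C f g" "idm (op C) = idm C" "zer (op C) a b = zer C b a"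
  "plus (op C) = plus C" "negm (op C) = negm C"
  by (simp_all add: op_def)

lemma hom_op[simp]: "hom (op C) a b = hom C b a" unfolding hom_def by auto

lemma mono_op[simp]: "mono (op C) f = epi C f" unfolding mono_def epi_def by simp
lemma epi_op[simp]: "epi (op C) f = mono C f" unfolding mono_def epi_def by auto
lemma ker_op[simp]: "is_kernel (op C) f k = is_cokernel C f k" unfolding is_kernel_def is_cokernel_def by simp
lemma coker_op[simp]: "is_cokernel (op C) f k = is_kernel C f k" unfolding is_kernel_def is_cokernel_def by simp
lemma ses_op[simp]: "ses (op C) f g = ses C g f" unfolding ses_def by auto
lemma zero_op[simp]: "zero_object (op C) z = zero_object C z" unfolding zero_object_def by auto
lemma biprod_op[simp]: "biproduct (op C) a b s p1 p2 i1 i2 = biproduct C a b s i1 i2 p1 p2"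
  unfolding biproduct_def by auto

context ab begin

lemma cat_op: "category (op C)"
  unfolding category_def
  apply (intro conjI ballI impI allI; simp only: op_simps hom_op)
  subgoal using arr_hom hom_objs by blast
  subgoal using arr_hom hom_objs by blast
  subgoal using id_hom by blast
  subgoal using comp_hom by blast
  subgoal using arr_hom id_r by blast
  subgoal using arr_hom id_l by blast
  subgoal by (metis arr_hom assoc)
  done

lemma pre_op: "preadditive (op C)"
  unfolding preadditive_def
  apply (intro conjI ballI impI allI cat_op; (simp only: op_simps hom_op)?)
  subgoal using zer_hom by blast
  subgoal using plus_hom by blast
  subgoal using neg_hom by blast
  subgoal using plus_assoc by blast
  subgoal using plus_comm by blast
  subgoal using plus_zer by blast
  subgoal using plus_neg by blast
  subgoal using distrib_r by blast
  subgoal using distrib_l by blast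
  done

lemma abelian_op: "abelian (op C)"
proof -
  have A: "(\<exists>z. zero_object C z) \<and>
     (\<forall>a\<in>Obj C. \<forall>b\<in>Obj C. \<exists>s p1 p2 i1 i2. biproduct C a b s p1 p2 i1 i2) \<and>
     (\<forall>f\<in>Arr C. (\<exists>k. is_kernel C f k) \<and> (\<exists>c. is_cokernel C f c)) \<and>
     (\<forall>f. mono C f \<longrightarrow> (\<exists>g. is_kernel C g f)) \<and>
     (\<forall>f. epi C f \<longrightarrow> (\<exists>g. is_cokernel C g f))" using ab unfolding abelian_def by (elim conjE) (intro conjI)
  show ?thesis unfolding abelian_def
  proof (intro conjI pre_op)
    show "\<exists>z. zero_object (op C) z" using A by simp
    show "\<forall>a\<in>Obj (op C). \<forall>b\<in>Obj (op C). \<exists>s p1 p2 i1 i2. biproduct (op C) a b s p1 p2 i1 i2"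
      using A by simp blast
    show "\<forall>f\<in>Arr (op C). (\<exists>k. is_kernel (op C) f k) \<and> (\<exists>c. is_cokernel (op C) f c)" using A by simp
    show "\<forall>f. mono (op C) f \<longrightarrow> (\<exists>g. is_kernel (op C) g f)" using A by simp
    show "\<forall>f. epi (op C) f \<longrightarrow> (\<exists>g. is_cokernel (op C) g f)" using A by simp
  qed
qed

end

lemma ab_op: "ab C \<Longrightarrow> ab (op C)"
  using ab.abelian_op ab.intro ab_def by blast




context ab begin

lemma biprod_ex: "a \<in> Obj C \<Longrightarrow> b \<in> Obj C \<Longrightarrow> \<exists>s p1 p2 i1 i2. biproduct C a b s p1 p2 i1 i2"
proof -
  have "\<forall>a\<in>Obj C. \<forall>b\<in>Obj C. \<exists>s p1 p2 i1 i2. biproduct C a b s p1 p2 i1 i2"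
    using ab unfolding abelian_def by (elim conjE) assumption
  then show "a \<in> Obj C \<Longrightarrow> b \<in> Obj C \<Longrightarrow> ?thesis" by blast
qed

lemma ker_ex: "f \<in> Arr C \<Longrightarrow> \<exists>k. is_kernel C f k"
proof -
  have "\<forall>f\<in>Arr C. (\<exists>k. is_kernel C f k) \<and> (\<exists>c. is_cokernel C f c)"
    using ab unfolding abelian_def by (elim conjE) assumption
  then show "f \<in> Arr C \<Longrightarrow> ?thesis" by blast
qed

lemma coker_ex: "f \<in> Arr C \<Longrightarrow> \<exists>k. is_cokernel C f k"
proof -
  have "\<forall>f\<in>Arr C. (\<exists>k. is_kernel C f k) \<and> (\<exists>c. is_cokernel C f c)"
    using ab unfolding abelian_def by (elim conjE) assumption
  then show "f \<in> Arr C \<Longrightarrow> ?thesis" by blast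
qed

lemma pullback:
  assumes s: "ses C f g" and h: "h \<in> hom C W (cod C g)"
  shows "\<exists>j \<pi> \<alpha>. ses C j \<pi> \<and> dom C j = dom C f \<and> cod C \<pi> = W \<and> \<alpha> \<in> hom C (dom C \<pi>) (dom C g)
     \<and> comp C g \<alpha> = comp C h \<pi> \<and> comp C \<alpha> j = f"
proof -
  define E where "E = dom C g"
  define A where "A = cod C g"
  define B where "B = dom C f"
  have fh: "f \<in> hom C B E" and gh: "g \<in> hom C E A" and gf: "comp C g f = zer C B A"
    and mf: "mono C f" and eg: "epi C g" and kf: "is_kernel C g f"
    using ses_facts[OF s] s unfolding E_def A_def B_def ses_def by auto
  have hh: "h \<in> hom C W A" using h A_def by simp
  have oE: "E \<in> Obj C" and oW: "W \<in> Obj C" and oA: "A \<in> Obj C" and oB: "B \<in> Obj C"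
    using hom_objs fh gh hh by auto
  obtain S p1 p2 i1 i2 where bp: "biproduct C E W S p1 p2 i1 i2" using biprod_ex oE oW by blast
  have p1: "p1 \<in> hom C S E" and p2: "p2 \<in> hom C S W" and i1: "i1 \<in> hom C E S" and i2: "i2 \<in> hom C W S"
    and p1i1: "comp C p1 i1 = idm C E" and p2i2: "comp C p2 i2 = idm C W"
    and p2i1: "comp C p2 i1 = zer C E W" and p1i2: "comp C p1 i2 = zer C W E"
    and sumid: "plus C (comp C i1 p1) (comp C i2 p2) = idm C S"
    using bp unfolding biproduct_def by auto
  have oS: "S \<in> Obj C" using hom_objs p1 by auto
  define m where "m = sub C (comp C g p1) (comp C h p2)"
  have gp1: "comp C g p1 \<in> hom C S A" using comp_hom p1 gh by blast
  have hp2: "comp C h p2 \<in> hom C S A" using comp_hom p2 hh by blast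
  have mh: "m \<in> hom C S A" unfolding m_def using sub_hom gp1 hp2 by blast
  have mi1: "comp C m i1 = g"
  proof -
    have "comp C m i1 = sub C (comp C (comp C g p1) i1) (comp C (comp C h p2) i1)"
      unfolding m_def using comp_sub_r i1 gp1 hp2 by blast
    also have "comp C (comp C g p1) i1 = g" using assoc[OF i1 p1 gh] p1i1 id_r gh by simp
    also have "comp C (comp C h p2) i1 = zer C E A" using assoc[OF i1 p2 hh] p2i1 comp_zer_r hh oE by simp
    finally show ?thesis using sub_zer gh by simp
  qed
  have em: "epi C m" unfolding epi_def
  proof (intro conjI ballI impI)
    show "m \<in> Arr C" using mh hom_iff by blast
    fix u v assume a: "u \<in> Arr C" "v \<in> Arr C" "dom C u = cod C m" "dom C v = cod C m"
      "cod C u = cod C v" "comp C u m = comp C v m"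
    have uh: "u \<in> hom C A (cod C u)" and vh: "v \<in> hom C A (cod C u)" using a mh hom_iff by auto
    have "comp C u g = comp C (comp C u m) i1" using assoc[OF i1 mh uh] mi1 by simp
    also have "\<dots> = comp C v g" using a(6) assoc[OF i1 mh vh] mi1 by simp
    finally show "u = v" using epi_cancel[OF eg] uh vh gh hom_iff by auto
  qed
  obtain k where kk: "is_kernel C m k" using ker_ex mh hom_iff by blast
  define K where "K = dom C k"
  have kh: "k \<in> hom C K S" and mk: "comp C m k = zer C K A" and mok: "mono C k"
    using kernel_arrs[OF kk] kernel_mono[OF kk] mh hom_iff unfolding K_def by auto
  have oK: "K \<in> Obj C" using hom_objs kh by auto
  define \<alpha> where "\<alpha> = comp C p1 k"
  define \<pi> where "\<pi> = comp C p2 k"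
  have ah: "\<alpha> \<in> hom C K E" and ph: "\<pi> \<in> hom C K W" unfolding \<alpha>_def \<pi>_def using comp_hom kh p1 p2 by auto
  have gapi: "comp C g \<alpha> = comp C h \<pi>"
  proof -
    have "zer C K A = comp C m k" using mk by simp
    also have "\<dots> = sub C (comp C (comp C g p1) k) (comp C (comp C h p2) k)"
      unfolding m_def using comp_sub_r kh gp1 hp2 by blast
    also have "\<dots> = sub C (comp C g \<alpha>) (comp C h \<pi>)"
      unfolding \<alpha>_def \<pi>_def using assoc[OF kh p1 gh] assoc[OF kh p2 hh] by simp
    finally show ?thesis using sub_eq comp_hom ah gh ph hh by metis
  qed
  have i1f: "comp C i1 f \<in> hom C B S" using comp_hom fh i1 by blast
  have "comp C m (comp C i1 f) = zer C B A" using assoc[OF fh i1 mh] mi1 gf by simp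
  then obtain j where jh: "j \<in> hom C B K" and kj: "comp C k j = comp C i1 f"
    using kernel_factor[OF kk] i1f mh hom_iff K_def by (metis (no_types, lifting))
  have aj: "comp C \<alpha> j = f"
    unfolding \<alpha>_def using assoc[OF jh kh p1] kj assoc[OF fh i1 p1] p1i1 id_l fh by simp
  have pj: "comp C \<pi> j = zer C B W"
    unfolding \<pi>_def using assoc[OF jh kh p2] kj assoc[OF fh i1 p2] p2i1 comp_zer_l fh oW by simp
  have jcancel: "\<And>x a b. a \<in> hom C x B \<Longrightarrow> b \<in> hom C x B \<Longrightarrow> comp C j a = comp C j b \<Longrightarrow> a = b"
  proof -
    fix x a b assume a: "a \<in> hom C x B" "b \<in> hom C x B" "comp C j a = comp C j b"
    have "comp C f a = comp C \<alpha> (comp C j a)" using assoc[OF a(1) jh ah] aj by simp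
    also have "\<dots> = comp C f b" using a(3) assoc[OF a(2) jh ah] aj by simp
    finally show "a = b" using mono_cancel[OF mf] a fh hom_iff by auto
  qed
  have kerpj: "is_kernel C \<pi> j" unfolding is_kernel_def
  proof (intro conjI ballI impI)
    show "\<pi> \<in> Arr C" "j \<in> Arr C" "cod C j = dom C \<pi>" "comp C \<pi> j = zer C (dom C j) (cod C \<pi>)"
      using ph jh pj hom_iff by auto
    fix t assume t: "t \<in> Arr C" "cod C t = dom C \<pi>" "comp C \<pi> t = zer C (dom C t) (cod C \<pi>)"
    define x where "x = dom C t"
    have th: "t \<in> hom C x K" using t ph hom_iff x_def by auto
    have ox: "x \<in> Obj C" using hom_objs th by auto
    have pt: "comp C \<pi> t = zer C x W" using t ph hom_iff x_def by auto
    have at: "comp C \<alpha> t \<in> hom C x E" using comp_hom th ah by blast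
    have "comp C g (comp C \<alpha> t) = comp C h (comp C \<pi> t)" using assoc[OF th ah gh] assoc[OF th ph hh] gapi by simp
    also have "\<dots> = zer C x A" using pt comp_zer_r hh ox by simp
    finally obtain u where uh: "u \<in> hom C x B" and fu: "comp C f u = comp C \<alpha> t"
      using kernel_factor[OF kf] at E_def A_def B_def by (metis (no_types, lifting))
    have ju: "comp C j u = t"
    proof -
      have kt: "comp C k t \<in> hom C x S" using comp_hom th kh by blast
      have "comp C k t = comp C (idm C S) (comp C k t)" using id_l kt by simp
      also have "\<dots> = plus C (comp C (comp C i1 p1) (comp C k t)) (comp C (comp C i2 p2) (comp C k t))"
        using sumid distrib_r kt comp_hom p1 i1 p2 i2 by metis
      also have "comp C (comp C i2 p2) (comp C k t) = comp C i2 (comp C \<pi> t)"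
        unfolding \<pi>_def using assoc[OF kt p2 i2] assoc[OF th kh p2] by simp
      also have "\<dots> = zer C x S" using pt comp_zer_r i2 ox by simp
      also have "comp C (comp C i1 p1) (comp C k t) = comp C i1 (comp C \<alpha> t)"
        unfolding \<alpha>_def using assoc[OF kt p1 i1] assoc[OF th kh p1] by simp
      finally have "comp C k t = comp C i1 (comp C \<alpha> t)"
        using plus_zer comp_hom at i1 by metis
      also have "\<dots> = comp C k (comp C j u)"
        using fu assoc[OF uh fh i1] assoc[OF uh jh kh] kj by simp
      finally show ?thesis using mono_cancel[OF mok] th comp_hom[OF uh jh] kh hom_iff by (metis)
    qed
    show "\<exists>!u. u \<in> hom C (dom C t) (dom C j) \<and> comp C j u = t"
    proof (rule ex1I[of _ u])
      show "u \<in> hom C (dom C t) (dom C j) \<and> comp C j u = t" using uh ju jh hom_iff x_def by auto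
      fix u' assume "u' \<in> hom C (dom C t) (dom C j) \<and> comp C j u' = t"
      then show "u' = u" using jcancel[of u' x u] uh ju jh hom_iff x_def by auto
    qed
  qed
  have epi_pi: "epi C \<pi>" unfolding epi_def
  proof (intro conjI ballI impI)
    show "\<pi> \<in> Arr C" using ph hom_iff by blast
    fix u v assume a: "u \<in> Arr C" "v \<in> Arr C" "dom C u = cod C \<pi>" "dom C v = cod C \<pi>"
      "cod C u = cod C v" "comp C u \<pi> = comp C v \<pi>"
    define T where "T = cod C u"
    have uh: "u \<in> hom C W T" and vh: "v \<in> hom C W T" using a ph hom_iff T_def by auto
    have oT: "T \<in> Obj C" using hom_objs uh by auto
    define d where "d = sub C u v"
    have dh: "d \<in> hom C W T" unfolding d_def using sub_hom uh vh by blast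
    have dp2: "comp C d p2 \<in> hom C S T" using comp_hom p2 dh by blast
    have "comp C d \<pi> = zer C K T" unfolding d_def using comp_sub_r[OF ph uh vh] a(6) sub_self comp_hom ph vh by metis
    then have "comp C (comp C d p2) k = zer C K T" unfolding \<pi>_def using assoc[OF kh p2 dh] by simp
    then obtain w where wh: "w \<in> hom C A T" and wm: "comp C w m = comp C d p2"
      using cokernel_factor[OF epi_coker_of_ker[OF em kk]] dp2 kh mh hom_iff K_def by (metis (no_types, lifting))
    have "comp C w g = comp C (comp C d p2) i1" using wm assoc[OF i1 mh wh] mi1 by simp
    also have "\<dots> = zer C E T" using assoc[OF i1 p2 dh] p2i1 comp_zer_r dh oE by simp
    also have "\<dots> = comp C (zer C A T) g" using comp_zer_l gh oT by simp
    finally have "w = zer C A T" using epi_cancel[OF eg] wh zer_hom oA oT gh hom_iff by auto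
    then have "comp C d p2 = zer C S T" using wm comp_zer_l mh oT by simp
    then have "d = zer C W T" using assoc[OF i2 p2 dh] p2i2 id_r dh comp_zer_l i2 oT by metis
    then show "u = v" using sub_eq[OF uh vh] d_def by simp
  qed
  have "ses C j \<pi>" unfolding ses_def using kerpj epi_coker_of_ker[OF epi_pi kerpj] by blast
  moreover have "dom C j = dom C f" "cod C \<pi> = W" using jh ph hom_iff B_def by auto
  moreover have "\<alpha> \<in> hom C (dom C \<pi>) (dom C g)" using ah ph hom_iff E_def by auto
  ultimately show ?thesis using gapi aj by blast
qed

end



context ab begin

lemma abop: "ab (op C)" using ab_op ab_axioms by blast

lemma pushout:
  assumes s: "ses C f g" and h: "h \<in> hom C (dom C f) Y"
  shows "\<exists>f' g' \<beta>. ses C f' g' \<and> dom C f' = Y \<and> cod C g' = cod C g \<and> \<beta> \<in> hom C (dom C g) (cod C f')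
     \<and> comp C \<beta> f = comp C f' h \<and> comp C g' \<beta> = g"
proof -
  have "\<exists>j \<pi> \<alpha>. ses (op C) j \<pi> \<and> dom (op C) j = dom (op C) g \<and> cod (op C) \<pi> = Y \<and> \<alpha> \<in> hom (op C) (dom (op C) \<pi>) (dom (op C) f)
     \<and> comp (op C) f \<alpha> = comp (op C) h \<pi> \<and> comp (op C) \<alpha> j = g"
    using ab.pullback[OF abop, of g f h Y] s h by simp
  then obtain j \<pi> \<alpha> where r: "ses C \<pi> j" "cod C j = cod C g" "dom C \<pi> = Y" "\<alpha> \<in> hom C (cod C f) (cod C \<pi>)"
    "comp C \<alpha> f = comp C \<pi> h" "comp C j \<alpha> = g" by auto
  have "cod C f = dom C g" using ses_facts[OF s] by simp
  then show ?thesis using r by metis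
qed

lemma mono_ker_of_coker: "mono C m \<Longrightarrow> is_cokernel C m c \<Longrightarrow> is_kernel C c m"
  using ab.epi_coker_of_ker[OF abop, of m c] by simp

lemma sec_ret:
  assumes s: "ses C f g" and sh: "s \<in> hom C (cod C g) (dom C g)" and gs: "comp C g s = idm C (cod C g)"
  shows "\<exists>r\<in>hom C (dom C g) (dom C f). comp C r f = idm C (dom C f)"
proof -
  note sf = ses_facts[OF s]
  define E where "E = dom C g"
  have gh: "g \<in> hom C E (cod C g)" and fh: "f \<in> hom C (dom C f) E" using sf E_def by auto
  have oE: "E \<in> Obj C" using hom_objs gh by auto
  have sg: "comp C s g \<in> hom C E E" using comp_hom gh sh E_def by blast
  define d where "d = sub C (idm C E) (comp C s g)"
  have dh: "d \<in> hom C E E" unfolding d_def using sub_hom id_hom oE sg by blast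
  have "comp C g d = sub C (comp C g (idm C E)) (comp C g (comp C s g))"
    unfolding d_def using comp_sub_l id_hom oE sg gh by blast
  also have "comp C g (comp C s g) = g" using assoc[OF gh sh gh[unfolded E_def]] gs id_l gh E_def by simp
  also have "comp C g (idm C E) = g" using id_r gh by blast
  finally have "comp C g d = zer C E (cod C g)" using sub_self gh by simp
  then obtain r where rh: "r \<in> hom C E (dom C f)" and fr: "comp C f r = d"
    using kernel_factor[of g f d E] s unfolding ses_def using dh E_def by blast
  have "comp C f (comp C r f) = comp C d f" using assoc[OF fh rh fh] fr by simp
  also have "\<dots> = sub C (comp C (idm C E) f) (comp C (comp C s g) f)"
    unfolding d_def using comp_sub_r fh id_hom oE sg by blast
  also have "comp C (comp C s g) f = zer C (dom C f) E"
    using assoc[OF fh gh sh[folded E_def]] sf(3) comp_zer_r sh E_def hom_objs fh by metis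
  also have "comp C (idm C E) f = f" using id_l fh by blast
  also have "sub C f (zer C (dom C f) E) = comp C f (idm C (dom C f))" using sub_zer fh id_r by metis
  finally have "comp C r f = idm C (dom C f)"
    using mono_cancel[OF sf(4)] comp_hom[OF fh rh] id_hom hom_objs fh by metis
  then show ?thesis using rh E_def by blast
qed

lemma ret_sec:
  assumes s: "ses C f g" and rh: "r \<in> hom C (dom C g) (dom C f)" and rf: "comp C r f = idm C (dom C f)"
  shows "\<exists>s\<in>hom C (cod C g) (dom C g). comp C g s = idm C (cod C g)"
proof -
  have "\<exists>s\<in>hom (op C) (dom (op C) f) (dom (op C) g). comp (op C) s g = idm (op C) (dom (op C) g)"
    using ab.sec_ret[OF abop, of g f r] s rh rf ses_facts(6)[OF s] by simp
  then show ?thesis using ses_facts(6)[OF s] by simp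
qed

lemma lift:
  assumes e: "ext1_zero C W (dom C f)" and s: "ses C f g" and h: "h \<in> hom C W (cod C g)"
  shows "\<exists>h'\<in>hom C W (dom C g). comp C g h' = h"
proof -
  obtain j \<pi> \<alpha> where r: "ses C j \<pi>" "dom C j = dom C f" "cod C \<pi> = W" "\<alpha> \<in> hom C (dom C \<pi>) (dom C g)"
     "comp C g \<alpha> = comp C h \<pi>" "comp C \<alpha> j = f" using pullback[OF s h] by blast
  obtain t where th: "t \<in> hom C W (dom C \<pi>)" and pt: "comp C \<pi> t = idm C W"
    using e r unfolding ext1_zero_def by blast
  have ph: "\<pi> \<in> hom C (dom C \<pi>) W" using ses_facts[OF r(1)] r(3) by simp
  have gh: "g \<in> hom C (dom C g) (cod C g)" using ses_facts[OF s] by simp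
  have "comp C g (comp C \<alpha> t) = comp C h (comp C \<pi> t)" using assoc[OF th r(4) gh] assoc[OF th ph h] r(5) by simp
  also have "\<dots> = h" using pt id_r h by simp
  finally show ?thesis using comp_hom th r(4) by blast
qed

lemma extend:
  assumes e: "ext1_zero C (cod C g) Y" and s: "ses C f g" and h: "h \<in> hom C (dom C f) Y"
  shows "\<exists>h'\<in>hom C (dom C g) Y. comp C h' f = h"
proof -
  obtain f' g' \<beta> where r: "ses C f' g'" "dom C f' = Y" "cod C g' = cod C g" "\<beta> \<in> hom C (dom C g) (cod C f')"
     "comp C \<beta> f = comp C f' h" "comp C g' \<beta> = g" using pushout[OF s h] by blast
  obtain t where th: "t \<in> hom C (cod C g') (dom C g')" and gt: "comp C g' t = idm C (cod C g')"
    using e r unfolding ext1_zero_def by metis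
  obtain q where qh: "q \<in> hom C (dom C g') (dom C f')" and qf: "comp C q f' = idm C (dom C f')"
    using sec_ret[OF r(1) th gt] by blast
  have fh: "f \<in> hom C (dom C f) (dom C g)" and f'h: "f' \<in> hom C Y (cod C f')" using ses_facts[OF s] ses_facts[OF r(1)] r(2) by auto
  have qh': "q \<in> hom C (cod C f') Y" using qh r(2) ses_facts[OF r(1)] by simp
  have "comp C (comp C q \<beta>) f = comp C q (comp C f' h)" using assoc[OF fh r(4) qh'] r(5) by simp
  also have "\<dots> = h" using assoc[OF h f'h qh'] qf r(2) id_l h by simp
  finally show ?thesis using comp_hom r(4) qh' by blast
qed

lemma hom_exact:
  assumes s: "ses C f g" and P: "P \<in> Obj C"
  shows "inj_on (comp C f) (hom C P (dom C f)) \<and>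
        comp C f ` hom C P (dom C f) = {u \<in> hom C P (dom C g). comp C g u = zer C P (cod C g)}"
proof (intro conjI)
  note sf = ses_facts[OF s]
  show "inj_on (comp C f) (hom C P (dom C f))"
    by (rule inj_onI) (use mono_cancel[OF sf(4)] in blast)
  show "comp C f ` hom C P (dom C f) = {u \<in> hom C P (dom C g). comp C g u = zer C P (cod C g)}"
  proof
    show "comp C f ` hom C P (dom C f) \<subseteq> {u \<in> hom C P (dom C g). comp C g u = zer C P (cod C g)}"
    proof
      fix x assume "x \<in> comp C f ` hom C P (dom C f)"
      then obtain u where uh: "u \<in> hom C P (dom C f)" and x: "x = comp C f u" by blast
      have "comp C g x = zer C P (cod C g)" using x assoc[OF uh sf(1) sf(2)] sf(3) comp_zer_l uh hom_objs sf(2) by metis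
      then show "x \<in> {u \<in> hom C P (dom C g). comp C g u = zer C P (cod C g)}" using x comp_hom uh sf(1) by blast
    qed
    show "{u \<in> hom C P (dom C g). comp C g u = zer C P (cod C g)} \<subseteq> comp C f ` hom C P (dom C f)"
    proof
      fix x assume "x \<in> {u \<in> hom C P (dom C g). comp C g u = zer C P (cod C g)}"
      then show "x \<in> comp C f ` hom C P (dom C f)"
        using kernel_factor[of g f x P] s unfolding ses_def by force
    qed
  qed
qed

lemma hom_exact_dual:
  assumes s: "ses C f g" and I: "I \<in> Obj C"
  shows "inj_on (\<lambda>u. comp C u g) (hom C (cod C g) I) \<and>
        (\<lambda>u. comp C u g) ` hom C (cod C g) I = {v \<in> hom C (dom C g) I. comp C v f = zer C (dom C f) I}"
proof -
  have "cod C f = dom C g" using ses_facts[OF s] by simp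
  moreover have "comp (op C) g = (\<lambda>u. comp C u g)" by (rule ext) simp
  ultimately show ?thesis using ab.hom_exact[OF abop, of g f I] s I by simp
qed

end



locale trip = ab +
  fixes X Z Y
  assumes ep: "enough_projectives C" and ei: "enough_injectives C"
    and tr: "complete_hereditary_cotorsion_triple C X Z Y"
begin

lemma facts: "cotorsion_pair C X Z" "cotorsion_pair C Z Y" "resolving C X" "resolving C Z"
  "\<forall>A\<in>Obj C. (\<exists>f g. ses C f g \<and> dom C f \<in> Z \<and> dom C g \<in> X \<and> cod C g = A) \<and>
        (\<exists>f g. ses C f g \<and> dom C f = A \<and> dom C g \<in> Z \<and> cod C g \<in> X)"
  "\<forall>A\<in>Obj C. (\<exists>f g. ses C f g \<and> dom C f \<in> Y \<and> dom C g \<in> Z \<and> cod C g = A) \<and>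
        (\<exists>f g. ses C f g \<and> dom C f = A \<and> dom C g \<in> Y \<and> cod C g \<in> Z)"
  using tr unfolding complete_hereditary_cotorsion_triple_def complete_cotorsion_pair_def
    hereditary_cotorsion_pair_def by auto

lemma Xeq: "X = {A\<in>Obj C. \<forall>B\<in>Z. ext1_zero C A B}" using facts(1) unfolding cotorsion_pair_def by blast
lemma Zeq: "Z = {B\<in>Obj C. \<forall>A\<in>X. ext1_zero C A B}" using facts(1) unfolding cotorsion_pair_def by blast
lemma Zeq2: "Z = {A\<in>Obj C. \<forall>B\<in>Y. ext1_zero C A B}" using facts(2) unfolding cotorsion_pair_def by blast
lemma Yeq: "Y = {B\<in>Obj C. \<forall>A\<in>Z. ext1_zero C A B}" using facts(2) unfolding cotorsion_pair_def by blast

lemma extXZ: "A \<in> X \<Longrightarrow> B \<in> Z \<Longrightarrow> ext1_zero C A B" using Xeq by blast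
lemma extZY: "A \<in> Z \<Longrightarrow> B \<in> Y \<Longrightarrow> ext1_zero C A B" using Yeq by blast
lemma XObj: "A \<in> X \<Longrightarrow> A \<in> Obj C" using Xeq by blast
lemma ZObj: "A \<in> Z \<Longrightarrow> A \<in> Obj C" using Zeq by blast
lemma YObj: "A \<in> Y \<Longrightarrow> A \<in> Obj C" using Yeq by blast

lemma precover: "A \<in> Obj C \<Longrightarrow> \<exists>f g. ses C f g \<and> dom C f \<in> Z \<and> dom C g \<in> X \<and> cod C g = A"
  using facts(5) by blast
lemma envZY: "A \<in> Obj C \<Longrightarrow> \<exists>f g. ses C f g \<and> dom C f = A \<and> dom C g \<in> Y \<and> cod C g \<in> Z"
  using facts(6) by blast
lemma Z_ext: "ses C f g \<Longrightarrow> dom C f \<in> Z \<Longrightarrow> cod C g \<in> Z \<Longrightarrow> dom C g \<in> Z"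
  using facts(4) unfolding resolving_def by blast
lemma Z_ker: "ses C f g \<Longrightarrow> dom C g \<in> Z \<Longrightarrow> cod C g \<in> Z \<Longrightarrow> dom C f \<in> Z"
  using facts(4) unfolding resolving_def by blast
lemma X_ker: "ses C f g \<Longrightarrow> dom C g \<in> X \<Longrightarrow> cod C g \<in> X \<Longrightarrow> dom C f \<in> X"
  using facts(3) unfolding resolving_def by blast
lemma proj_X: "projective C P \<Longrightarrow> P \<in> X" using facts(3) unfolding resolving_def by blast
lemma proj_Z: "projective C P \<Longrightarrow> P \<in> Z" using facts(4) unfolding resolving_def by blast

lemma enough_p: "a \<in> Obj C \<Longrightarrow> \<exists>P e. projective C P \<and> e \<in> hom C P a \<and> epi C e"
  using ep unfolding enough_projectives_def by blast
lemma enough_i: "a \<in> Obj C \<Longrightarrow> \<exists>I m. injective C I \<and> m \<in> hom C a I \<and> mono C m"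
  using ei unfolding enough_injectives_def by blast

lemma ker_ses: "epi C e \<Longrightarrow> \<exists>k. ses C k e"
proof -
  assume e: "epi C e"
  then have "e \<in> Arr C" unfolding epi_def by blast
  then obtain k where "is_kernel C e k" using ker_ex by blast
  then show ?thesis using epi_coker_of_ker[OF e] unfolding ses_def by blast
qed

lemma coker_ses: "mono C m \<Longrightarrow> \<exists>c. ses C m c"
proof -
  assume e: "mono C m"
  then have "m \<in> Arr C" unfolding mono_def by blast
  then obtain k where "is_cokernel C m k" using coker_ex by blast
  then show ?thesis using mono_ker_of_coker[OF e] unfolding ses_def by blast
qed

lemma epi_hom: "epi C e \<Longrightarrow> e \<in> hom C (dom C e) (cod C e)" unfolding epi_def hom_def by blast
lemma mono_hom: "mono C e \<Longrightarrow> e \<in> hom C (dom C e) (cod C e)" unfolding mono_def hom_def by blast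

lemma proj_lift: "projective C P \<Longrightarrow> epi C e \<Longrightarrow> h \<in> hom C P (cod C e) \<Longrightarrow> \<exists>h'\<in>hom C P (dom C e). comp C e h' = h"
  unfolding projective_def by blast
lemma inj_ext: "injective C I \<Longrightarrow> mono C m \<Longrightarrow> h \<in> hom C (dom C m) I \<Longrightarrow> \<exists>h'\<in>hom C (cod C m) I. comp C h' m = h"
  unfolding injective_def by blast

lemma XZ_proj: assumes W: "W \<in> X" "W \<in> Z" shows "projective C W"
proof -
  have oW: "W \<in> Obj C" using W XObj by blast
  obtain P e where P: "projective C P" and eh: "e \<in> hom C P W" and ee: "epi C e" using enough_p oW by blast
  obtain k where k: "ses C k e" using ker_ses ee by blast
  have "dom C e = P" "cod C e = W" using eh hom_iff by auto
  then have "dom C k \<in> Z" using Z_ker[OF k] proj_Z[OF P] W by simp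
  then have "ext1_zero C W (dom C k)" using extXZ W by blast
  then obtain s where sh: "s \<in> hom C W P" and es: "comp C e s = idm C W"
    using k \<open>dom C e = P\<close> \<open>cod C e = W\<close> unfolding ext1_zero_def by blast
  show ?thesis unfolding projective_def
  proof (intro conjI allI impI)
    show "W \<in> Obj C" by (fact oW)
    fix e' h assume e': "epi C e'" and h: "h \<in> hom C W (cod C e')"
    have he: "comp C h e \<in> hom C P (cod C e')" using comp_hom eh h by blast
    obtain l where lh: "l \<in> hom C P (dom C e')" and el: "comp C e' l = comp C h e"
      using proj_lift[OF P e' he] by blast
    have "comp C e' (comp C l s) = comp C (comp C h e) s" using assoc[OF sh lh epi_hom[OF e']] el by simp
    also have "\<dots> = h" using assoc[OF sh eh h] es id_r h by simp
    finally show "\<exists>h'\<in>hom C W (dom C e'). comp C e' h' = h" using comp_hom sh lh by blast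
  qed
qed

lemma coker_Z:
  assumes W: "W \<in> Z" and I: "injective C I" and s: "ses C m c" and dm: "dom C m = W" and dc: "dom C c = I"
  shows "cod C c \<in> Z"
proof -
  note sf = ses_facts[OF s]
  define Q where "Q = cod C c"
  have ch: "c \<in> hom C I Q" using sf dc Q_def by simp
  have mh: "m \<in> hom C W I" using sf dc dm by simp
  have oQ: "Q \<in> Obj C" using hom_objs ch by blast
  have "\<forall>X'\<in>X. ext1_zero C X' Q" unfolding ext1_zero_def
  proof (intro ballI allI impI)
    fix X' a b assume X': "X' \<in> X" and ab': "ses C a b" and da: "dom C a = Q" and cb: "cod C b = X'"
    note abf = ses_facts[OF ab']
    define E where "E = dom C b"
    have ah: "a \<in> hom C Q E" and bh: "b \<in> hom C E X'" using abf da cb E_def by auto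
    obtain P p where P: "projective C P" and ph: "p \<in> hom C P X'" and pe: "epi C p"
      using enough_p XObj[OF X'] by blast
    obtain \<kappa> where kp: "ses C \<kappa> p" using ker_ses pe by blast
    note kf = ses_facts[OF kp]
    define \<Omega> where "\<Omega> = dom C \<kappa>"
    have kh: "\<kappa> \<in> hom C \<Omega> P" using kf ph hom_iff \<Omega>_def by auto
    have dp: "dom C p = P" "cod C p = X'" using ph hom_iff by auto
    have \<Omega>X: "\<Omega> \<in> X" using X_ker[OF kp] proj_X[OF P] X' dp \<Omega>_def by simp
    obtain l where lh: "l \<in> hom C P E" and bl: "comp C b l = p"
      using proj_lift[OF P abf(5)] ph cb E_def by auto
    have lk: "comp C l \<kappa> \<in> hom C \<Omega> E" using comp_hom kh lh by blast
    have "comp C b (comp C l \<kappa>) = comp C p \<kappa>" using assoc[OF kh lh bh] bl by simp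
    also have "\<dots> = zer C \<Omega> X'" using kf(3) dp \<Omega>_def by simp
    finally obtain lam where lamh: "lam \<in> hom C \<Omega> Q" and alam: "comp C a lam = comp C l \<kappa>"
      using kernel_factor[of b a "comp C l \<kappa>" \<Omega>] ab' lk E_def cb da unfolding ses_def by auto
    have "ext1_zero C \<Omega> (dom C m)" using extXZ \<Omega>X W dm by simp
    then obtain \<mu> where \<mu>h: "\<mu> \<in> hom C \<Omega> I" and cmu: "comp C c \<mu> = lam"
      using lift[OF _ s, of \<Omega> lam] lamh Q_def dc by auto
    obtain \<nu> where \<nu>h: "\<nu> \<in> hom C P I" and \<nu>k: "comp C \<nu> \<kappa> = \<mu>"
      using inj_ext[OF I kf(4)] \<mu>h \<Omega>_def kf(6) dp by auto
    have acn: "comp C a (comp C c \<nu>) \<in> hom C P E" using comp_hom \<nu>h ch ah by blast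
    define d where "d = sub C l (comp C a (comp C c \<nu>))"
    have dh: "d \<in> hom C P E" unfolding d_def using sub_hom lh acn by blast
    have "comp C d \<kappa> = sub C (comp C l \<kappa>) (comp C (comp C a (comp C c \<nu>)) \<kappa>)"
      unfolding d_def using comp_sub_r kh lh acn by blast
    also have "comp C (comp C a (comp C c \<nu>)) \<kappa> = comp C a lam"
      using assoc[OF kh comp_hom[OF \<nu>h ch] ah] assoc[OF kh \<nu>h ch] \<nu>k cmu by simp
    also have "sub C (comp C l \<kappa>) (comp C a lam) = zer C \<Omega> E" using alam sub_self lk by simp
    finally obtain \<sigma> where \<sigma>h: "\<sigma> \<in> hom C X' E" and \<sigma>p: "comp C \<sigma> p = d"
      using cokernel_factor[of \<kappa> p d E] kp dh kh hom_iff dp \<Omega>_def kf(6) unfolding ses_def by (metis (no_types, lifting))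
    have "comp C (comp C b \<sigma>) p = comp C b d" using assoc[OF ph \<sigma>h bh] \<sigma>p by simp
    also have "\<dots> = sub C (comp C b l) (comp C b (comp C a (comp C c \<nu>)))"
      unfolding d_def using comp_sub_l lh acn bh by blast
    also have "comp C b (comp C a (comp C c \<nu>)) = zer C P X'"
      using assoc[OF comp_hom[OF \<nu>h ch] ah bh] abf(3) da cb comp_zer_l comp_hom[OF \<nu>h ch] XObj[OF X'] by simp
    also have "sub C (comp C b l) (zer C P X') = comp C (idm C X') p" using bl sub_zer ph id_l by metis
    finally have "comp C b \<sigma> = idm C X'"
      using epi_cancel[OF pe] comp_hom[OF \<sigma>h bh] id_hom XObj[OF X'] dp by metis
    then show "\<exists>s\<in>hom C X' (dom C b). comp C b s = idm C X'" using \<sigma>h E_def by blast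
  qed
  then show ?thesis using Zeq oQ Q_def by blast
qed

lemma YZ_inj: assumes W: "W \<in> Y" "W \<in> Z" shows "injective C W"
proof -
  have oW: "W \<in> Obj C" using W YObj by blast
  obtain I m where I: "injective C I" and mh: "m \<in> hom C W I" and mm: "mono C m" using enough_i oW by blast
  obtain c where s: "ses C m c" using coker_ses mm by blast
  have dm: "dom C m = W" "cod C m = I" using mh hom_iff by auto
  have dc: "dom C c = I" using ses_facts(6)[OF s] dm by simp
  have "cod C c \<in> Z" using coker_Z[OF W(2) I s dm(1) dc] .
  then have "ext1_zero C (cod C c) W" using extZY W by blast
  then obtain t where "t \<in> hom C (cod C c) (dom C c)" "comp C c t = idm C (cod C c)"
    using s dm unfolding ext1_zero_def by blast
  then obtain r where rh: "r \<in> hom C I W" and rm: "comp C r m = idm C W"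
    using sec_ret[OF s] dc dm by metis
  show ?thesis unfolding injective_def
  proof (intro conjI allI impI)
    show "W \<in> Obj C" by (fact oW)
    fix m' h assume m': "mono C m'" and h: "h \<in> hom C (dom C m') W"
    have mh': "comp C m h \<in> hom C (dom C m') I" using comp_hom mh h by blast
    obtain l where lh: "l \<in> hom C (cod C m') I" and lm: "comp C l m' = comp C m h"
      using inj_ext[OF I m' mh'] by blast
    have "comp C (comp C r l) m' = comp C r (comp C m h)" using assoc[OF mono_hom[OF m'] lh rh] lm by simp
    also have "\<dots> = h" using assoc[OF h mh rh] rm id_l h by simp
    finally show "\<exists>h'\<in>hom C (cod C m') W. comp C h' m' = h" using comp_hom lh rh by blast
  qed
qed


lemma precover_ext:
  assumes kp: "ses C k p" and dk: "dom C k \<in> Z" and ph: "\<phi> \<in> hom C (dom C k) V" and V: "V \<in> Y"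
  shows "\<exists>\<psi>\<in>hom C (dom C p) V. comp C \<psi> k = \<phi>"
proof -
  note kf = ses_facts[OF kp]
  obtain i c where ic: "ses C i c" and di: "dom C i = dom C k" and dc: "dom C c \<in> Y" and cc: "cod C c \<in> Z"
    using envZY ZObj[OF dk] by blast
  note icf = ses_facts[OF ic]
  obtain \<phi>' where \<phi>'h: "\<phi>' \<in> hom C (dom C c) V" and \<phi>'i: "comp C \<phi>' i = \<phi>"
    using extend[OF extZY[OF cc V] ic] ph di by auto
  have "dom C c \<in> Z" using Z_ext[OF ic] dk di cc by simp
  then have inj: "injective C (dom C c)" using YZ_inj dc by blast
  obtain l where lh: "l \<in> hom C (cod C k) (dom C c)" and lk: "comp C l k = i"
    using inj_ext[OF inj kf(4)] icf di by auto
  have "comp C (comp C \<phi>' l) k = \<phi>" using assoc[OF kf(1) lh[unfolded kf(6)] \<phi>'h] lk \<phi>'i by simp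
  moreover have "comp C \<phi>' l \<in> hom C (dom C p) V" using comp_hom lh \<phi>'h kf(6) by metis
  ultimately show ?thesis by blast
qed

lemma Fconf: "F_conflation C X f g \<Longrightarrow> ses C f g"
  "F_conflation C X f g \<Longrightarrow> W \<in> X \<Longrightarrow> h \<in> hom C W (cod C g) \<Longrightarrow> \<exists>h'\<in>hom C W (dom C g). comp C g h' = h"
  unfolding F_conflation_def by blast+

lemma Fsplit:
  assumes F: "F_conflation C X f g" and dY: "dom C f \<in> Y"
  shows "\<exists>r\<in>hom C (dom C g) (dom C f). comp C r f = idm C (dom C f)"
proof -
  have s: "ses C f g" using Fconf(1)[OF F] .
  note sf = ses_facts[OF s]
  have oc: "cod C g \<in> Obj C" using hom_objs sf(2) by blast
  obtain k p where kp: "ses C k p" and dk: "dom C k \<in> Z" and dp: "dom C p \<in> X" and cp: "cod C p = cod C g"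
    using precover[OF oc] by blast
  note kf = ses_facts[OF kp]
  have pg: "p \<in> hom C (dom C p) (cod C g)" using kf cp by simp
  obtain q where qh: "q \<in> hom C (dom C p) (dom C g)" and gq: "comp C g q = p" using Fconf(2)[OF F dp pg] by blast
  have kh: "k \<in> hom C (dom C k) (dom C p)" using kf by simp
  have qk: "comp C q k \<in> hom C (dom C k) (dom C g)" using comp_hom kh qh by blast
  have "comp C g (comp C q k) = zer C (dom C k) (cod C g)" using assoc[OF kh qh sf(2)] gq kf(3) cp by simp
  then obtain \<phi> where \<phi>h: "\<phi> \<in> hom C (dom C k) (dom C f)" and f\<phi>: "comp C f \<phi> = comp C q k"
    using kernel_factor[of g f "comp C q k" "dom C k"] s qk unfolding ses_def by blast
  obtain \<psi> where \<psi>h: "\<psi> \<in> hom C (dom C p) (dom C f)" and \<psi>k: "comp C \<psi> k = \<phi>"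
    using precover_ext[OF kp dk \<phi>h dY] by blast
  have f\<psi>: "comp C f \<psi> \<in> hom C (dom C p) (dom C g)" using comp_hom \<psi>h sf(1) by blast
  define d where "d = sub C q (comp C f \<psi>)"
  have dh: "d \<in> hom C (dom C p) (dom C g)" unfolding d_def using sub_hom qh f\<psi> by blast
  have "comp C d k = sub C (comp C q k) (comp C (comp C f \<psi>) k)"
    unfolding d_def using comp_sub_r kh qh f\<psi> by blast
  also have "comp C (comp C f \<psi>) k = comp C q k" using assoc[OF kh \<psi>h sf(1)] \<psi>k f\<phi> by simp
  also have "sub C (comp C q k) (comp C q k) = zer C (dom C k) (dom C g)" using sub_self qk by blast
  finally obtain \<sigma> where \<sigma>h: "\<sigma> \<in> hom C (cod C p) (dom C g)" and \<sigma>p: "comp C \<sigma> p = d"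
    using cokernel_factor[of k p d "dom C g"] kp dh kf(6) unfolding ses_def by (metis (no_types, lifting))
  have \<sigma>h': "\<sigma> \<in> hom C (cod C g) (dom C g)" using \<sigma>h cp by simp
  have "comp C (comp C g \<sigma>) p = comp C g d" using assoc[OF pg \<sigma>h' sf(2)] \<sigma>p by simp
  also have "\<dots> = sub C (comp C g q) (comp C g (comp C f \<psi>))"
    unfolding d_def using comp_sub_l qh f\<psi> sf(2) by blast
  also have "comp C g (comp C f \<psi>) = zer C (dom C p) (cod C g)"
    using assoc[OF \<psi>h sf(1) sf(2)] sf(3) comp_zer_l \<psi>h oc by simp
  also have "sub C (comp C g q) (zer C (dom C p) (cod C g)) = comp C (idm C (cod C g)) p" using gq sub_zer pg id_l by metis
  finally have "comp C g \<sigma> = idm C (cod C g)"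
    using epi_cancel[OF kf(5)] comp_hom[OF \<sigma>h' sf(2)] id_hom oc cp by metis
  then show ?thesis using sec_ret[OF s \<sigma>h'] by blast
qed

lemma Y_Finj: assumes V: "V \<in> Y" shows "F_injective C X V"
  unfolding F_injective_def
proof (intro conjI allI impI)
  show oV: "V \<in> Obj C" using YObj V by blast
  fix f g assume F: "F_conflation C X f g"
  have s: "ses C f g" using Fconf(1)[OF F] .
  note sf = ses_facts[OF s]
  show "inj_on (\<lambda>u. comp C u g) (hom C (cod C g) V)"
    "(\<lambda>u. comp C u g) ` hom C (cod C g) V = {v \<in> hom C (dom C g) V. comp C v f = zer C (dom C f) V}"
    using hom_exact_dual[OF s oV] by auto
  show "(\<lambda>v. comp C v f) ` hom C (dom C g) V = hom C (dom C f) V"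
  proof
    show "(\<lambda>v. comp C v f) ` hom C (dom C g) V \<subseteq> hom C (dom C f) V" using comp_hom sf(1) by blast
    show "hom C (dom C f) V \<subseteq> (\<lambda>v. comp C v f) ` hom C (dom C g) V"
    proof
      fix h assume h: "h \<in> hom C (dom C f) V"
      obtain f' g' \<beta> where r: "ses C f' g'" "dom C f' = V" "cod C g' = cod C g" "\<beta> \<in> hom C (dom C g) (cod C f')"
        "comp C \<beta> f = comp C f' h" "comp C g' \<beta> = g" using pushout[OF s h] by blast
      note rf = ses_facts[OF r(1)]
      have F': "F_conflation C X f' g'" unfolding F_conflation_def
      proof (intro conjI ballI r(1))
        fix W w assume W: "W \<in> X" and w: "w \<in> hom C W (cod C g')"
        obtain l where lh: "l \<in> hom C W (dom C g)" and gl: "comp C g l = w" using Fconf(2)[OF F W] w r(3) by auto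
        have "comp C g' (comp C \<beta> l) = w" using assoc[OF lh r(4) rf(2)[folded rf(6)]] r(6) gl by simp
        moreover have "comp C \<beta> l \<in> hom C W (dom C g')" using comp_hom lh r(4) rf(6) by metis
        ultimately show "\<exists>h'\<in>hom C W (dom C g'). comp C g' h' = w" by blast
      qed
      obtain q where qh: "q \<in> hom C (dom C g') V" and qf: "comp C q f' = idm C V"
        using Fsplit[OF F'] r(2) V by auto
      have qh': "q \<in> hom C (cod C f') V" using qh rf(6) by simp
      have f'h: "f' \<in> hom C V (cod C f')" using rf(1) r(2) rf(6) by simp
      have "comp C (comp C q \<beta>) f = h" using assoc[OF sf(1) r(4) qh'] r(5) assoc[OF h f'h qh'] qf id_l h by simp
      moreover have "comp C q \<beta> \<in> hom C (dom C g) V" using comp_hom r(4) qh' by blast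
      ultimately show "h \<in> (\<lambda>v. comp C v f) ` hom C (dom C g) V" by force
    qed
  qed
qed

lemma X_Fproj: assumes W: "W \<in> X" shows "F_projective C X W"
  unfolding F_projective_def
proof (intro conjI allI impI)
  show oW: "W \<in> Obj C" using XObj W by blast
  fix f g assume F: "F_conflation C X f g"
  have s: "ses C f g" using Fconf(1)[OF F] .
  note sf = ses_facts[OF s]
  show "inj_on (comp C f) (hom C W (dom C f))"
    "comp C f ` hom C W (dom C f) = {u \<in> hom C W (dom C g). comp C g u = zer C W (cod C g)}"
    using hom_exact[OF s oW] by auto
  show "comp C g ` hom C W (dom C g) = hom C W (cod C g)"
    using Fconf(2)[OF F W] comp_hom sf(2) by blast
qed

lemma precover_F: assumes A: "A \<in> Obj C"
  shows "\<exists>f g. F_conflation C X f g \<and> dom C g \<in> X \<and> cod C g = A"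
proof -
  obtain f g where s: "ses C f g" and df: "dom C f \<in> Z" and dg: "dom C g \<in> X" and cg: "cod C g = A"
    using precover[OF A] by blast
  have "F_conflation C X f g" unfolding F_conflation_def
    using s lift[OF extXZ[OF _ df] s] by blast
  then show ?thesis using dg cg by blast
qed

lemma Fproj_X: assumes P: "F_projective C X P" shows "P \<in> X"
proof -
  have oP: "P \<in> Obj C" using P unfolding F_projective_def by blast
  obtain f g where F: "F_conflation C X f g" and dg: "dom C g \<in> X" and cg: "cod C g = P"
    using precover_F[OF oP] by blast
  have "comp C g ` hom C P (dom C g) = hom C P (cod C g)" using P F unfolding F_projective_def by blast
  then obtain s where sh: "s \<in> hom C P (dom C g)" and gs: "comp C g s = idm C P"
    using id_hom[OF oP] cg by (metis imageE)
  have gh: "g \<in> hom C (dom C g) P" using ses_facts(2)[OF Fconf(1)[OF F]] cg by simp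
  have "\<forall>B\<in>Z. ext1_zero C P B" unfolding ext1_zero_def
  proof (intro ballI allI impI)
    fix B f' g' assume B: "B \<in> Z" and s': "ses C f' g'" and df': "dom C f' = B" and cg': "cod C g' = P"
    obtain t where th: "t \<in> hom C (dom C g) (dom C g')" and gt: "comp C g' t = g"
      using lift[of "dom C g" f' g' g] extXZ[OF dg B] s' df' cg' gh by auto
    have g'h: "g' \<in> hom C (dom C g') P" using ses_facts(2)[OF s'] cg' by simp
    have "comp C g' (comp C t s) = idm C P" using assoc[OF sh th g'h] gt gs by simp
    then show "\<exists>s\<in>hom C P (dom C g'). comp C g' s = idm C P" using comp_hom sh th by blast
  qed
  then show ?thesis using Xeq oP by blast
qed

lemma env_F: assumes A: "A \<in> Obj C"
  shows "\<exists>f g. F_conflation C X f g \<and> dom C f = A \<and> dom C g \<in> Y"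
proof -
  obtain f g where s: "ses C f g" and df: "dom C f = A" and dg: "dom C g \<in> Y" and cg: "cod C g \<in> Z"
    using envZY[OF A] by blast
  note sf = ses_facts[OF s]
  have "F_conflation C X f g" unfolding F_conflation_def
  proof (intro conjI ballI s)
    fix W h assume W: "W \<in> X" and h: "h \<in> hom C W (cod C g)"
    obtain k p where kp: "ses C k p" and dk: "dom C k \<in> Z" and dp: "dom C p \<in> X" and cp: "cod C p = cod C g"
      using precover[OF ZObj[OF cg]] by blast
    have "dom C p \<in> Z" using Z_ext[OF kp] dk cp cg by simp
    then have pp: "projective C (dom C p)" using XZ_proj dp by blast
    obtain h1 where h1h: "h1 \<in> hom C W (dom C p)" and ph1: "comp C p h1 = h"
      using lift[OF extXZ[OF W dk] kp] h cp by auto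
    have pg: "p \<in> hom C (dom C p) (cod C g)" using ses_facts(2)[OF kp] cp by simp
    obtain l where lh: "l \<in> hom C (dom C p) (dom C g)" and gl: "comp C g l = p"
      using proj_lift[OF pp sf(5) pg] by blast
    have "comp C g (comp C l h1) = h" using assoc[OF h1h lh sf(2)] gl ph1 by simp
    then show "\<exists>h'\<in>hom C W (dom C g). comp C g h' = h" using comp_hom h1h lh by blast
  qed
  then show ?thesis using df dg by blast
qed

lemma Finj_Y: assumes I: "F_injective C X I" shows "I \<in> Y"
proof -
  have oI: "I \<in> Obj C" using I unfolding F_injective_def by blast
  obtain f g where F: "F_conflation C X f g" and df: "dom C f = I" and dg: "dom C g \<in> Y"
    using env_F[OF oI] by blast
  note sf = ses_facts[OF Fconf(1)[OF F]]
  have "(\<lambda>v. comp C v f) ` hom C (dom C g) I = hom C (dom C f) I" using I F unfolding F_injective_def by blast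
  then obtain r where rh: "r \<in> hom C (dom C g) I" and rf: "comp C r f = idm C I"
    using id_hom[OF oI] df by (metis (no_types, lifting) imageE)
  have fh: "f \<in> hom C I (dom C g)" using sf(1) df by simp
  have "\<forall>A\<in>Z. ext1_zero C A I" unfolding ext1_zero_def
  proof (intro ballI allI impI)
    fix A f' g' assume A: "A \<in> Z" and s': "ses C f' g'" and df': "dom C f' = I" and cg': "cod C g' = A"
    note s'f = ses_facts[OF s']
    obtain e where eh: "e \<in> hom C (dom C g') (dom C g)" and ef: "comp C e f' = f"
      using extend[OF _ s', of "dom C g" f] extZY[OF A dg] cg' df' fh by auto
    have f'h: "f' \<in> hom C I (dom C g')" using s'f(1) df' by simp
    have "comp C (comp C r e) f' = idm C I" using assoc[OF f'h eh rh] ef rf by simp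
    then show "\<exists>s\<in>hom C A (dom C g'). comp C g' s = idm C A"
      using ret_sec[OF s', of "comp C r e"] comp_hom eh rh df' cg' by auto
  qed
  then show ?thesis using Yeq oI by blast
qed

theorem main:
  "F_enough_projectives C X \<and> F_enough_injectives C X \<and>
   {P \<in> Obj C. F_projective C X P} = X \<and> {I \<in> Obj C. F_injective C X I} = Y"
proof (intro conjI)
  show "F_enough_projectives C X" unfolding F_enough_projectives_def
    using precover_F X_Fproj by blast
  show "F_enough_injectives C X" unfolding F_enough_injectives_def
  proof
    fix a assume "a \<in> Obj C"
    then obtain f g where F: "F_conflation C X f g" and "dom C f = a" and "dom C g \<in> Y" using env_F by blast
    moreover have "cod C f = dom C g" using ses_facts(6)[OF Fconf(1)[OF F]] .
    ultimately show "\<exists>f g. F_conflation C X f g \<and> F_injective C X (cod C f) \<and> dom C f = a"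
      using Y_Finj by metis
  qed
  show "{P \<in> Obj C. F_projective C X P} = X" using Fproj_X X_Fproj XObj by blast
  show "{I \<in> Obj C. F_injective C X I} = Y" using Finj_Y Y_Finj YObj by blast
qed

end

theorem lemma5p2:
  fixes C :: "('o, 'm) acat" and X Z Y :: "'o set"
  assumes "abelian C"
    and "krull_schmidt C"
    and "enough_projectives C"
    and "enough_injectives C"
    and "complete_hereditary_cotorsion_triple C X Z Y"
  shows "F_enough_projectives C X \<and> F_enough_injectives C X \<and>
         {P \<in> Obj C. F_projective C X P} = X \<and>
         {I \<in> Obj C. F_injective C X I} = Y"
proof -
  interpret trip C X Z Y using assms by (simp add: trip_def trip_axioms_def ab_def)
  show ?thesis by (rule main)
qed


end
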